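(* Let $A:\mathbb{R}^n\rightrightarrows\mathbb{R}^n$ be maximally monotone, let $x^*$ satisfy $0\in A(x^* )$, and let $\tilde A=I-J_A$ with $J_A=(I+A)^{-1}$; assume $\tilde A$ is differentiable. Let $X:[0,\infty)\to\mathbb{R}^n$ be continuous with $X(0)=x_0$, twice continuously differentiable on $(0,\infty)$, and a solution of $$\ddot X+\frac{2}{t}\dot X+\frac{2}{t}\tilde A(X)+2\nabla\tilde A(X)\dot X=0,\qquad t>0,$$ in the integrated form $t\dot X(t)+X(t)+2t\tilde A(X(t))=x_0$ for all $t>0$. Then for every $t>0$, $$\|\tilde A(X(t))\|^2\leqslant\frac{\|x_0-x^*\|^2}{t^2+2t},\qquad \langle\tilde A(X(t)),X(t)-x^*\rangle\leqslant\frac{\|x_0-x^*\|^2}{2t}.$$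
   Context: $J_A$ is the resolvent of $A$ and $\tilde A=I-J_A$ its Yosida approximation; $\nabla\tilde A$ denotes the Jacobian of $\tilde A$. The paper states that, with $X(0)=x_0$, the second-order ODE is equivalent to the first-order equation $t\dot X+X+2t\tilde A(X)=x_0$. *)

theory Defs
  imports "HOL-Analysis.Analysis"
begin

definition monotone_op :: "('a::real_inner \<Rightarrow> 'a set) \<Rightarrow> bool" where
  "monotone_op A \<longleftrightarrow> (\<forall>x y u v. u \<in> A x \<longrightarrow> v \<in> A y \<longrightarrow> 0 \<le> inner (x - y) (u - v))"

definition maximal_monotone :: "('a::real_inner \<Rightarrow> 'a set) \<Rightarrow> bool" where
  "maximal_monotone A \<longleftrightarrow> monotone_op A \<and>
     (\<forall>B. monotone_op B \<and> (\<forall>x. A x \<subseteq> B x) \<longrightarrow> B = A)"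

text \<open>Resolvent J_A = (I + A)^{-1}: J_A x is the (unique, for maximal monotone A)
  y with x \<in> y + A y.\<close>
definition resolvent :: "('a::real_vector \<Rightarrow> 'a set) \<Rightarrow> 'a \<Rightarrow> 'a" where
  "resolvent A x = (THE y. x - y \<in> A y)"

definition yosida :: "('a::real_vector \<Rightarrow> 'a set) \<Rightarrow> 'a \<Rightarrow> 'a" where
  "yosida A x = x - resolvent A x"

end

theory Submission imports Defs begin

lemma df_finite:
  fixes S :: "('a::euclidean_space \<times> 'a) set" and x :: 'a
  assumes fin: "finite S"
    and mono: "\<forall>p\<in>S. \<forall>q\<in>S. 0 \<le> inner (fst p - fst q) (snd p - snd q)"
  shows "\<exists>y. \<forall>p\<in>S. 0 \<le> inner (y - fst p) (x - y - snd p)"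
proof (rule ccontr)
  assume neg: "\<not> ?thesis"
  define g where "g p y = inner (y - fst p) (x - y - snd p)" for p y
  have negg: "\<exists>p\<in>S. g p y < 0" for y using neg unfolding g_def by (meson not_le)
  then have Sne: "S \<noteq> {}" by blast
  define w where "w p y = max 0 (- g p y)" for p y
  define W where "W y = (\<Sum>p\<in>S. w p y)" for y
  have w0: "0 \<le> w p y" for p y by (simp add: w_def)
  have Wpos: "W y > 0" for y
  proof -
    obtain p where p: "p \<in> S" "g p y < 0" using negg by blast
    have "w p y \<le> W y" unfolding W_def by (rule member_le_sum[OF p(1)]) (auto simp: w0 fin)
    moreover have "w p y > 0" using p by (simp add: w_def)
    ultimately show ?thesis by simp
  qed
  define K where "K = convex hull (fst ` S)"
  define f where "f y = (\<Sum>p\<in>S. (w p y / W y) *\<^sub>R fst p)" for y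
  have contw: "continuous_on UNIV (w p)" for p
    unfolding w_def g_def by (intro continuous_intros)
  have contW: "continuous_on UNIV W"
    unfolding W_def by (intro continuous_intros contw)
  have contf: "continuous_on K f"
    unfolding f_def
    apply (intro continuous_intros continuous_on_subset[OF contw] continuous_on_subset[OF contW])
    using Wpos by (auto simp: less_imp_neq[symmetric])
  have sum1: "(\<Sum>p\<in>S. w p y / W y) = 1" for y
    using Wpos[of y] by (simp add: W_def sum_divide_distrib[symmetric])
  have fK: "f \<in> K \<rightarrow> K"
  proof
    fix y assume "y \<in> K"
    show "f y \<in> K" unfolding f_def K_def
      by (rule convex_sum[OF fin convex_convex_hull sum1])
         (auto simp: w0 intro!: divide_nonneg_pos Wpos hull_inc)
  qed
  have "compact K" unfolding K_def by (simp add: finite_imp_compact_convex_hull fin)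
  moreover have "convex K" unfolding K_def by simp
  moreover have "K \<noteq> {}" unfolding K_def using Sne by simp
  ultimately obtain y where "y \<in> K" and fy: "f y = y" using brouwer[OF _ _ _ contf fK] by blast
  define l where "l p = w p y / W y" for p
  have l0: "0 \<le> l p" for p using w0 Wpos[of y] by (simp add: l_def)
  have l1: "(\<Sum>p\<in>S. l p) = 1" using sum1 by (simp add: l_def)
  have ydef: "y = (\<Sum>p\<in>S. l p *\<^sub>R fst p)" using fy by (simp add: f_def l_def)
  have "(\<Sum>p\<in>S. l p * g p y) < 0"
  proof -
    have wg: "w p y * g p y = - (w p y * w p y)" for p by (simp add: w_def max_def power2_eq_square)
    have "(\<Sum>p\<in>S. l p * g p y) = - (\<Sum>p\<in>S. (w p y * w p y)) / W y"
      by (simp add: l_def wg sum_divide_distrib sum_negf)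
    moreover have "(\<Sum>p\<in>S. (w p y * w p y)) > 0"
    proof -
      obtain p where p: "p \<in> S" "g p y < 0" using negg by blast
      have "(w p y * w p y) \<le> (\<Sum>p\<in>S. (w p y * w p y))" by (rule member_le_sum[OF p(1)]) (auto simp: fin)
      moreover have "w p y > 0" using p by (simp add: w_def)
      ultimately show ?thesis by (meson less_le_trans mult_pos_pos)
    qed
    ultimately show ?thesis using Wpos[of y] by (simp add: divide_neg_pos)
  qed
  moreover have "(\<Sum>p\<in>S. l p * g p y) \<ge> 0"
  proof -
    have a: "(\<Sum>p\<in>S. l p * inner (y - fst p) (x - y)) = 0"
    proof -
      have "(\<Sum>p\<in>S. l p *\<^sub>R (y - fst p)) = 0"
        using l1 ydef by (simp add: scaleR_diff_right sum_subtractf scaleR_sum_left[symmetric])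
      then have "inner (\<Sum>p\<in>S. l p *\<^sub>R (y - fst p)) (x - y) = 0" by simp
      then show ?thesis by (simp add: inner_sum_left)
    qed
    have b: "fst p - y = (\<Sum>q\<in>S. l q *\<^sub>R (fst p - fst q))" for p
      using l1 ydef by (simp add: scaleR_diff_right sum_subtractf scaleR_sum_left[symmetric])
    define M where "M = (\<Sum>p\<in>S. \<Sum>q\<in>S. l p * l q * inner (fst p - fst q) (snd p))"
    have c: "(\<Sum>p\<in>S. l p * g p y) = M"
    proof -
      have "(\<Sum>p\<in>S. l p * g p y) = (\<Sum>p\<in>S. l p * inner (y - fst p) (x - y)) + (\<Sum>p\<in>S. l p * inner (fst p - y) (snd p))"
        unfolding g_def sum.distrib[symmetric] by (rule sum.cong) (simp_all add: inner_diff_right inner_diff_left algebra_simps)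
      also have "\<dots> = (\<Sum>p\<in>S. l p * inner (fst p - y) (snd p))" using a by simp
      also have "\<dots> = M" unfolding M_def
        by (subst b) (simp add: inner_sum_left sum_distrib_left mult.assoc)
      finally show ?thesis .
    qed
    have "M = (\<Sum>p\<in>S. \<Sum>q\<in>S. l p * l q * inner (fst q - fst p) (snd q))" unfolding M_def
      by (subst sum.swap) (simp add: mult.commute)
    then have "2 * M = M + (\<Sum>p\<in>S. \<Sum>q\<in>S. l p * l q * inner (fst q - fst p) (snd q))"
      by simp
    also have "\<dots> = (\<Sum>p\<in>S. \<Sum>q\<in>S. l p * l q * inner (fst p - fst q) (snd p - snd q))"
      unfolding M_def sum.distrib[symmetric]
      by (intro sum.cong refl) (simp add: inner_diff_right inner_diff_left algebra_simps)
    also have "\<dots> \<ge> 0" using mono l0 by (intro sum_nonneg) (simp add: mult_nonneg_nonneg)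
    finally show ?thesis using c by simp
  qed
  ultimately show False by simp
qed

lemma inner_ball_char:
  fixes a p :: "'a::real_inner"
  shows "{y. 0 \<le> inner (y - a) (p - y)} = cball ((1/2) *\<^sub>R (a + p)) (norm (p - a) / 2)"
proof -
  define m where "m = (1/2) *\<^sub>R (a + p)"
  define h where "h = (1/2) *\<^sub>R (p - a)"
  have hh: "(1/2) *\<^sub>R z + (1/2) *\<^sub>R z = z" for z :: 'a
    by (simp flip: scaleR_add_left)
  have id: "inner (y - a) (p - y) = (norm (p - a) / 2)^2 - (dist m y)^2" for y
  proof -
    have e1: "y - a = (y - m) + h" unfolding m_def h_def
      by (simp add: algebra_simps hh)
    have e2: "p - y = h - (y - m)" unfolding m_def h_def by (simp add: algebra_simps hh)
    have 0: "inner (d + h) (h - d) = inner h h - inner d d" for d :: 'a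
      unfolding inner_add_left inner_diff_right using inner_commute[of h d] by linarith
    note 1 = 0[of "y - m"]
    have 2: "inner h h = (norm (p - a) / 2)^2"
      unfolding h_def by (simp add: power2_norm_eq_inner[symmetric] power_divide)
    have 3: "inner (y - m) (y - m) = (dist m y)^2"
      by (simp add: dist_norm power2_norm_eq_inner[symmetric] norm_minus_commute)
    have "inner (y - a) (p - y) = inner ((y - m) + h) (h - (y - m))" by (simp only: e1 e2)
    then show ?thesis using 1 2 3 by linarith
  qed
  have iff: "0 \<le> inner (y - a) (p - y) \<longleftrightarrow> dist m y \<le> norm (p - a) / 2" for y
  proof -
    have "0 \<le> inner (y - a) (p - y) \<longleftrightarrow> (dist m y)^2 \<le> (norm (p - a) / 2)^2"
      unfolding id by simp
    also have "\<dots> \<longleftrightarrow> dist m y \<le> norm (p - a) / 2"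
      by (rule power_mono_iff) simp_all
    finally show ?thesis .
  qed
  show ?thesis unfolding m_def[symmetric]
    by (rule set_eqI) (simp only: mem_Collect_eq mem_cball iff)
qed

lemma minty:
  fixes A :: "'a::euclidean_space \<Rightarrow> 'a set"
  assumes mm: "maximal_monotone A" and z: "0 \<in> A xs"
  shows "\<exists>y. x - y \<in> A y"
proof -
  have mono: "monotone_op A" using mm by (simp add: maximal_monotone_def)
  define C where "C p = {y. 0 \<le> inner (y - fst p) (x - y - snd p)}" for p :: "'a \<times> 'a"
  define G where "G = {p. snd p \<in> A (fst p)}"
  have "\<Inter> (C ` G) \<noteq> {}"
  proof (rule compact_fip_Heine_Borel)
    fix T assume "T \<in> C ` G"
    then obtain p where T: "T = C p" by blast
    have "C p = {y. 0 \<le> inner (y - fst p) ((x - snd p) - y)}"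
      unfolding C_def by (simp add: algebra_simps)
    then show "compact T" using T by (simp add: inner_ball_char)
  next
    fix F' assume F': "finite F'" "F' \<subseteq> C ` G"
    then obtain S where S: "S \<subseteq> G" "finite S" "F' = C ` S"
      by (meson finite_subset_image)
    have "\<forall>p\<in>S. \<forall>q\<in>S. 0 \<le> inner (fst p - fst q) (snd p - snd q)"
      using S(1) mono unfolding G_def monotone_op_def by blast
    then obtain y where "\<forall>p\<in>S. 0 \<le> inner (y - fst p) (x - y - snd p)"
      using df_finite[OF S(2)] by blast
    then have "y \<in> \<Inter> F'" using S(3) by (auto simp: C_def)
    then show "\<Inter> F' \<noteq> {}" by blast
  qed
  then obtain y where y: "\<And>p. p \<in> G \<Longrightarrow> y \<in> C p" by blast
  have yA: "0 \<le> inner (y - a) (x - y - b)" if "b \<in> A a" for a b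
    using y[of "(a, b)"] that by (simp add: G_def C_def)
  define B where "B v = (if v = y then insert (x - y) (A v) else A v)" for v
  have "monotone_op B"
    unfolding monotone_op_def
  proof (intro allI impI)
    fix x1 y1 u v assume u: "u \<in> B x1" and v: "v \<in> B y1"
    consider "u \<in> A x1" "v \<in> A y1" | "x1 = y" "u = x - y" "v \<in> A y1"
      | "u \<in> A x1" "y1 = y" "v = x - y" | "x1 = y" "u = x - y" "y1 = y" "v = x - y"
      using u v unfolding B_def by (auto split: if_splits)
    then show "0 \<le> inner (x1 - y1) (u - v)"
    proof cases
      case 1 then show ?thesis using mono unfolding monotone_op_def by blast
    next
      case 2
      have "inner (x1 - y1) (u - v) = inner (y - y1) (x - y - v)"
        using 2 by (simp only: 2)
      then show ?thesis using yA[of v y1] 2 by simp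
    next
      case 3
      have e: "x1 - y = -(y - x1)" "x - y - u = -(u - (x - y))" by simp_all
      have "inner (x1 - y1) (u - v) = inner (y - x1) (x - y - u)"
        by (simp only: 3 e inner_minus_left inner_minus_right minus_minus)
      then show ?thesis using yA[of u x1] 3 by simp
    next
      case 4 then show ?thesis by simp
    qed
  qed
  moreover have "\<forall>v. A v \<subseteq> B v" by (auto simp: B_def)
  ultimately have "B = A" using mm by (simp add: maximal_monotone_def)
  then have "x - y \<in> A y" by (metis B_def insertI1)
  then show ?thesis by blast
qed

lemma resolvent_in:
  fixes A :: "'a::euclidean_space \<Rightarrow> 'a set"
  assumes mm: "maximal_monotone A" and z: "0 \<in> A xs"
  shows "x - resolvent A x \<in> A (resolvent A x)"
proof -
  have mono: "monotone_op A" using mm by (simp add: maximal_monotone_def)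
  obtain y where y: "x - y \<in> A y" using minty[OF mm z] by blast
  have uniq: "y' = y" if "x - y' \<in> A y'" for y'
  proof -
    have "0 \<le> inner (y' - y) ((x - y') - (x - y))" using mono that y unfolding monotone_op_def by blast
    also have "\<dots> = - inner (y' - y) (y' - y)" by (simp add: inner_diff_right algebra_simps)
    finally have "inner (y' - y) (y' - y) \<le> 0" by simp
    then have "inner (y' - y) (y' - y) = 0" using inner_ge_zero[of "y' - y"] by linarith
    then show ?thesis by simp
  qed
  show ?thesis unfolding resolvent_def
    by (rule theI[of "\<lambda>y. x - y \<in> A y", OF y uniq])
qed

lemma yosida_in:
  fixes A :: "'a::euclidean_space \<Rightarrow> 'a set"
  assumes mm: "maximal_monotone A" and z: "0 \<in> A xs"
  shows "yosida A x \<in> A (x - yosida A x)"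
  using resolvent_in[OF mm z, of x] by (simp add: yosida_def)

lemma yosida_firm:
  fixes A :: "'a::euclidean_space \<Rightarrow> 'a set"
  assumes mm: "maximal_monotone A" and z: "0 \<in> A xs"
  shows "(norm (yosida A x - yosida A y))^2 \<le> inner (x - y) (yosida A x - yosida A y)"
proof -
  have mono: "monotone_op A" using mm by (simp add: maximal_monotone_def)
  have "0 \<le> inner ((x - yosida A x) - (y - yosida A y)) (yosida A x - yosida A y)"
    using mono yosida_in[OF mm z, of x] yosida_in[OF mm z, of y] unfolding monotone_op_def by blast
  also have "\<dots> = inner (x - y) (yosida A x - yosida A y) - (norm (yosida A x - yosida A y))^2"
    by (simp add: power2_norm_eq_inner inner_diff_left algebra_simps)
  finally show ?thesis by simp
qed

lemma yosida_zero:
  fixes A :: "'a::euclidean_space \<Rightarrow> 'a set"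
  assumes mm: "maximal_monotone A" and z: "0 \<in> A xs"
  shows "yosida A xs = 0"
proof -
  have r: "xs - resolvent A xs \<in> A (resolvent A xs)" by (rule resolvent_in[OF mm z])
  have mono: "monotone_op A" using mm by (simp add: maximal_monotone_def)
  let ?y = "resolvent A xs"
  have "0 \<le> inner (?y - xs) ((xs - ?y) - 0)" using mono r z unfolding monotone_op_def by blast
  also have "\<dots> = - inner (?y - xs) (?y - xs)" by (simp add: inner_diff_right algebra_simps)
  finally have "inner (?y - xs) (?y - xs) \<le> 0" by simp
  then have "inner (?y - xs) (?y - xs) = 0" using inner_ge_zero[of "?y - xs"] by linarith
  then have "?y = xs" by simp
  then show ?thesis by (simp add: yosida_def)
qed

lemma deriv_monotone:
  fixes f :: "'a::real_inner \<Rightarrow> 'a"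
  assumes df: "(f has_derivative f') (at x)"
    and mono: "\<And>y. 0 \<le> inner (f y - f x) (y - x)"
  shows "0 \<le> inner (f' h) h"
proof (rule ccontr)
  assume neg: "\<not> ?thesis"
  define \<phi> where "\<phi> s = inner (f (x + s *\<^sub>R h)) h" for s :: real
  have lin: "bounded_linear f'" using df by (rule has_derivative_bounded_linear)
  have dl: "((\<lambda>s. x + s *\<^sub>R h) has_derivative (\<lambda>s. s *\<^sub>R h)) (at 0)"
    by (auto intro!: derivative_eq_intros)
  have df0: "(f has_derivative f') (at ((\<lambda>s. x + s *\<^sub>R h) 0))" using df by simp
  have "((f \<circ> (\<lambda>s. x + s *\<^sub>R h)) has_derivative (f' \<circ> (\<lambda>s. s *\<^sub>R h))) (at 0)"
    by (rule diff_chain_at[OF dl df0])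
  then have "((\<lambda>s. f (x + s *\<^sub>R h)) has_derivative (\<lambda>s. s *\<^sub>R f' h)) (at 0)"
    using linear_scale[OF bounded_linear.linear[OF lin]] by (simp add: o_def)
  from has_derivative_inner_left[OF this, of h]
  have "(\<phi> has_derivative (\<lambda>s. inner (f' h) h * s)) (at 0)"
    unfolding \<phi>_def by (simp add: mult.commute)
  then have "DERIV \<phi> 0 :> inner (f' h) h" by (simp add: has_field_derivative_def)
  from DERIV_neg_dec_right[OF this] neg obtain d where d: "d > 0"
    and dd: "\<And>k. k > 0 \<Longrightarrow> k < d \<Longrightarrow> \<phi> (0 + k) < \<phi> 0" by force
  have "\<phi> (d/2) < \<phi> 0" using dd[of "d/2"] d by simp
  moreover have "0 \<le> inner (f (x + (d/2) *\<^sub>R h) - f x) ((d/2) *\<^sub>R h)"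
    using mono[of "x + (d/2) *\<^sub>R h"] by simp
  then have "0 \<le> (d/2) * inner (f (x + (d/2) *\<^sub>R h) - f x) h" by simp
  then have "0 \<le> inner (f (x + (d/2) *\<^sub>R h) - f x) h" using d by (simp add: zero_le_mult_iff)
  then have "\<phi> 0 \<le> \<phi> (d/2)" by (simp add: \<phi>_def inner_diff_left)
  ultimately show False by simp
qed

theorem theorem9:
  fixes A :: "'a::euclidean_space \<Rightarrow> 'a set"
    and xs x0 :: 'a
    and X X' X'' :: "real \<Rightarrow> 'a"
    and DA :: "'a \<Rightarrow> 'a \<Rightarrow> 'a"
  assumes maxmono: "maximal_monotone A"
    and zero: "0 \<in> A xs"
    and diff: "\<And>x. (yosida A has_derivative DA x) (at x)"
    and cont: "continuous_on {0..} X"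
    and init: "X 0 = x0"
    and d1: "\<And>t. t > 0 \<Longrightarrow> (X has_vector_derivative X' t) (at t)"
    and d2: "\<And>t. t > 0 \<Longrightarrow> (X' has_vector_derivative X'' t) (at t)"
    and cont2: "continuous_on {0<..} X''"
    and ode: "\<And>t. t > 0 \<Longrightarrow>
       X'' t + (2 / t) *\<^sub>R X' t + (2 / t) *\<^sub>R yosida A (X t) + 2 *\<^sub>R DA (X t) (X' t) = 0"
    and integrated: "\<And>t. t > 0 \<Longrightarrow>
       t *\<^sub>R X' t + X t + (2 * t) *\<^sub>R yosida A (X t) = x0"
    and tpos: "t > 0"
  shows "(norm (yosida A (X t)))\<^sup>2 \<le> (norm (x0 - xs))\<^sup>2 / (t\<^sup>2 + 2 * t)
       \<and> inner (yosida A (X t)) (X t - xs) \<le> (norm (x0 - xs))\<^sup>2 / (2 * t)"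
proof -
  let ?Y = "yosida A"
  define V where "V = (\<lambda>r. ?Y (X r))"
  define D where "D = (\<lambda>r. DA (X r) (X' r))"
  define F where "F = (\<lambda>r. 2 * r^2 * inner (V r) (V r) + 2 * r * inner (V r) (X r - x0))"
  have firm: "\<And>x y. (norm (?Y x - ?Y y))^2 \<le> inner (x - y) (?Y x - ?Y y)"
    by (rule yosida_firm[OF maxmono zero])
  have Yxs: "?Y xs = 0" by (rule yosida_zero[OF maxmono zero])
  have Ymono: "0 \<le> inner (?Y y - ?Y x) (y - x)" for x y
    using firm[of y x] by (smt (verit) inner_commute zero_le_power2)
  have contY: "isCont ?Y x" for x
    using has_derivative_continuous[OF diff[of x]] by simp
  have dV: "(V has_derivative (\<lambda>h. h *\<^sub>R D s)) (at s)" if "s > 0" for s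
  proof -
    have dX: "(X has_derivative (\<lambda>h. h *\<^sub>R X' s)) (at s)"
      using d1[OF that] by (simp add: has_vector_derivative_def)
    have lin: "bounded_linear (DA (X s))" using diff by (rule has_derivative_bounded_linear)
    have "((?Y \<circ> X) has_derivative (DA (X s) \<circ> (\<lambda>h. h *\<^sub>R X' s))) (at s)"
      by (rule diff_chain_at[OF dX diff])
    then show ?thesis
      using linear_scale[OF bounded_linear.linear[OF lin]] by (simp add: o_def V_def D_def)
  qed
  have dXs: "(X has_derivative (\<lambda>h. h *\<^sub>R X' s)) (at s)" if "s > 0" for s
    using d1[OF that] by (simp add: has_vector_derivative_def)
  have DX: "0 \<le> inner (D s) (X' s)" for s
    unfolding D_def by (rule deriv_monotone[OF diff Ymono])
  have dF: "DERIV F s :> - 2 * s^2 * inner (D s) (X' s)" if s: "s > 0" for s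
  proof -
    have P: "((\<lambda>r. inner (V r) (V r)) has_real_derivative 2 * inner (V s) (D s)) (at s)"
    proof -
      have "((\<lambda>r. inner (V r) (V r)) has_derivative
              (\<lambda>h. inner (V s) (h *\<^sub>R D s) + inner (h *\<^sub>R D s) (V s))) (at s)"
        by (rule has_derivative_inner[OF dV[OF s] dV[OF s]])
      moreover have "(\<lambda>h. inner (V s) (h *\<^sub>R D s) + inner (h *\<^sub>R D s) (V s)) = (*) (2 * inner (V s) (D s))"
        by (auto simp: inner_commute algebra_simps)
      ultimately show ?thesis by (simp add: has_field_derivative_def)
    qed
    have Q: "((\<lambda>r. inner (V r) (X r - x0)) has_real_derivative
               inner (V s) (X' s) + inner (D s) (X s - x0)) (at s)"
    proof -
      have dX0: "((\<lambda>r. X r - x0) has_derivative (\<lambda>h. h *\<^sub>R X' s)) (at s)"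
        using dXs[OF s] by (auto intro!: derivative_eq_intros)
      have "((\<lambda>r. inner (V r) (X r - x0)) has_derivative
              (\<lambda>h. inner (V s) (h *\<^sub>R X' s) + inner (h *\<^sub>R D s) (X s - x0))) (at s)"
        by (rule has_derivative_inner[OF dV[OF s] dX0])
      moreover have "(\<lambda>h. inner (V s) (h *\<^sub>R X' s) + inner (h *\<^sub>R D s) (X s - x0))
          = (*) (inner (V s) (X' s) + inner (D s) (X s - x0))"
        by (auto simp: algebra_simps)
      ultimately show ?thesis by (simp add: has_field_derivative_def)
    qed
    have dd: "DERIV F s :> 2 * (2 * s) * inner (V s) (V s) + 2 * s^2 * (2 * inner (V s) (D s))
          + (2 * inner (V s) (X s - x0) + 2 * s * (inner (V s) (X' s) + inner (D s) (X s - x0)))"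
      unfolding F_def
      by (rule derivative_eq_intros P Q refl | simp)+
    have "X s - x0 = - (s *\<^sub>R X' s) - (2 * s) *\<^sub>R V s"
      using integrated[OF s] unfolding V_def by (simp add: algebra_simps)
    then have i1: "inner (V s) (X s - x0) = - s * inner (V s) (X' s) - 2 * s * inner (V s) (V s)"
      and i2: "inner (D s) (X s - x0) = - s * inner (D s) (X' s) - 2 * s * inner (D s) (V s)"
      by (simp_all add: inner_diff_right)
    have c: "inner (D s) (V s) = inner (V s) (D s)" by (rule inner_commute)
    have "2 * (2 * s) * inner (V s) (V s) + 2 * s^2 * (2 * inner (V s) (D s))
          + (2 * inner (V s) (X s - x0) + 2 * s * (inner (V s) (X' s) + inner (D s) (X s - x0)))
          = - 2 * s^2 * inner (D s) (X' s)"
      unfolding i1 i2 c by (simp add: power2_eq_square algebra_simps)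
    then show ?thesis using dd by simp
  qed
  have Fmono: "F t \<le> F e" if e: "0 < e" "e < t" for e
    using e by (intro DERIV_nonpos_imp_nonincreasing[of e t F])
      (auto intro!: exI[of _ "- 2 * _^2 * inner (D _) (X' _)"] dF DX mult_nonneg_nonneg)
  have Xlim: "(X \<longlongrightarrow> x0) (at_right 0)"
  proof -
    have "(X \<longlongrightarrow> X 0) (at 0 within {0..})"
      using cont by (simp add: continuous_on_def)
    then have "(X \<longlongrightarrow> X 0) (at 0 within {0<..})"
      by (rule tendsto_within_subset) auto
    then show ?thesis using init by simp
  qed
  have Vlim: "(V \<longlongrightarrow> ?Y x0) (at_right 0)"
    unfolding V_def using isCont_tendsto_compose[OF contY Xlim] .
  have Flim: "(F \<longlongrightarrow> 0) (at_right 0)"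
  proof -
    have "(F \<longlongrightarrow> 2 * 0^2 * inner (?Y x0) (?Y x0) + 2 * 0 * inner (?Y x0) (x0 - x0)) (at_right 0)"
      unfolding F_def by (intro tendsto_intros Vlim Xlim)
    then show ?thesis by simp
  qed
  have "F t \<le> 0"
  proof (rule tendsto_le[OF _ Flim tendsto_const])
    show "at_right (0::real) \<noteq> bot" by simp
    show "\<forall>\<^sub>F r in at_right 0. F t \<le> F r"
      using eventually_at_right_real[OF tpos] by eventually_elim (auto intro: Fmono)
  qed
  define v where "v = V t"
  define n where "n = norm v"
  define w where "w = norm (x0 - xs)"
  define I where "I = inner v (X t - xs)"
  have n0: "0 \<le> n" and w0: "0 \<le> w" by (simp_all add: n_def w_def)
  have key: "t * n^2 + I \<le> n * w"
  proof -
    have "2 * t * (t * inner v v + inner v (X t - x0)) \<le> 0"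
      using \<open>F t \<le> 0\<close> by (simp add: F_def v_def power2_eq_square algebra_simps)
    then have a: "t * inner v v + inner v (X t - x0) \<le> 0"
      using tpos by (simp add: mult_le_0_iff)
    have "inner v (X t - x0) = I - inner v (x0 - xs)" by (simp add: I_def inner_diff_right)
    moreover have "inner v (x0 - xs) \<le> n * w" unfolding n_def w_def by (rule norm_cauchy_schwarz)
    moreover have "t * inner v v = t * n^2" by (simp add: n_def power2_norm_eq_inner)
    ultimately show ?thesis using a by linarith
  qed
  have In: "n^2 \<le> I"
    using firm[of "X t" xs] by (simp add: Yxs n_def I_def v_def V_def inner_commute)
  have tn: "(t + 1) * n \<le> w"
  proof (cases "n = 0")
    case True then show ?thesis using w0 by simp
  next
    case False
    then have "n > 0" using n0 by simp
    have "(t + 1) * n * n \<le> w * n" using key In by (simp add: power2_eq_square algebra_simps)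
    then show ?thesis using \<open>n > 0\<close> by simp
  qed
  have c1: "n^2 \<le> w^2 / (t^2 + 2 * t)"
  proof -
    have "((t + 1) * n)^2 \<le> w^2" using tn n0 tpos by (intro power_mono) simp_all
    moreover have "((t + 1) * n)^2 = n^2 * (t^2 + 2 * t) + n^2"
      by (simp add: power2_eq_square algebra_simps)
    ultimately have "n^2 * (t^2 + 2 * t) \<le> w^2"
      using zero_le_power2[of n] by linarith
    moreover have "t^2 + 2 * t > 0" using tpos by (intro add_pos_pos) simp_all
    ultimately show ?thesis by (simp add: pos_le_divide_eq)
  qed
  have c2: "I \<le> w^2 / (2 * t)"
  proof -
    have "0 \<le> (w - t * n)^2 + (t * n)^2" by simp
    moreover have "(w - t * n)^2 + (t * n)^2 = w^2 - 2 * t * (n * w - t * n^2)"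
      by (simp add: power2_eq_square algebra_simps)
    ultimately have "2 * t * (n * w - t * n^2) \<le> w^2" by linarith
    moreover have "2 * t * I \<le> 2 * t * (n * w - t * n^2)" using key tpos by simp
    ultimately have "2 * t * I \<le> w^2" by linarith
    then show ?thesis using tpos by (simp add: pos_le_divide_eq mult.commute)
  qed
  show ?thesis using c1 c2 by (simp add: n_def w_def I_def v_def V_def)
qed

end
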